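(* Let $a:[0,1]\to[0,\infty)$ be bounded and measurable. There exist constants $h_0>0$ and $\gamma_0>0$ such that for every $N\ge1$ with $h=1/(N+1)\in(0,h_0)$ and all nonzero integers $n\ne m$ with $|n|,|m|\le N$, one has $|\lambda_h^n-\lambda_h^m|\ge\gamma_0$.
   Context: For $N\ge1$, $h=1/(N+1)$, $x_j=jh$, $a_j=a(x_j)$; $K_h=\frac1h\mathrm{tridiag}(-1,2,-1)$, $M_h=\frac h4\mathrm{tridiag}(1,2,1)$, $L_h=h\,\mathrm{diag}(a_1,\dots,a_N)$. Let $0<\mu_h^1<\dots<\mu_h^N$ be the (simple, positive) eigenvalues of $M_h^{-1}(K_h+L_h)$, and for $1\le|n|\le N$ let $\lambda_h^n=\mathrm{sgn}(n)\sqrt{\mu_h^{|n|}}$; the numbers $i\lambda_h^n$ are exactly the eigenvalues of the $2N\times2N$ matrix $\mathcal A_h=\begin{pmatrix}0&-I\\ M_h^{-1}(K_h+L_h)&0\end{pmatrix}$. *)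

theory Defs
  imports "HOL-Analysis.Analysis" "Jordan_Normal_Form.Gauss_Jordan_Elimination" "Jordan_Normal_Form.Char_Poly"
begin

text \<open>Mesh size h = 1/(N+1); nodes x_j = j h, j = 1..N (matrix row/column index i = j - 1).\<close>
definition mesh :: "nat \<Rightarrow> real" where "mesh N = 1 / (real N + 1)"

definition K_h :: "nat \<Rightarrow> real mat" where
  "K_h N = mat N N (\<lambda>(i,j). (1 / mesh N) *
      (if i = j then 2 else if i = j + 1 \<or> j = i + 1 then -1 else 0))"

definition M_h :: "nat \<Rightarrow> real mat" where
  "M_h N = mat N N (\<lambda>(i,j). (mesh N / 4) *
      (if i = j then 2 else if i = j + 1 \<or> j = i + 1 then 1 else 0))"

definition L_h :: "(real \<Rightarrow> real) \<Rightarrow> nat \<Rightarrow> real mat" where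
  "L_h a N = mat N N (\<lambda>(i,j). if i = j then mesh N * a (real (i + 1) * mesh N) else 0)"

definition op_h :: "(real \<Rightarrow> real) \<Rightarrow> nat \<Rightarrow> real mat" where
  "op_h a N = the (mat_inverse (M_h N)) * (K_h N + L_h a N)"

definition mu_h :: "(real \<Rightarrow> real) \<Rightarrow> nat \<Rightarrow> nat \<Rightarrow> real" where
  "mu_h a N k = sorted_list_of_set {\<mu>. eigenvalue (op_h a N) \<mu>} ! (k - 1)"

definition lambda_h :: "(real \<Rightarrow> real) \<Rightarrow> nat \<Rightarrow> int \<Rightarrow> real" where
  "lambda_h a N n = of_int (sgn n) * sqrt (mu_h a N (nat \<bar>n\<bar>))"

end

theory Submission
  imports Defs
begin



lemma pid1: fixes s c t :: real shows "(1 + t * s * c)^2 + (t * s^2)^2 = 1 + 2 * t * s * c + t^2 * s^2 * (s^2 + c^2)"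
  by (simp add: power2_eq_square algebra_simps)
lemma pid2: fixes s c t :: real shows "c * (1 + t * s * c) + t * s^3 = c + t * s * (s^2 + c^2)"
  by (simp add: power2_eq_square power3_eq_cube algebra_simps)
lemma pid3: fixes s c co :: real shows "c * (- s) * s - c * co * co = - c * (s^2 + co^2)"
  by (simp add: power2_eq_square algebra_simps)

definition Gf :: "real \<Rightarrow> real \<Rightarrow> real" where
  "Gf p t = p - arctan (t * sin p ^ 2 / (1 + t * sin p * cos p))"

definition Dd :: "real \<Rightarrow> real \<Rightarrow> real" where
  "Dd p t = 1 + 2 * t * sin p * cos p + t^2 * sin p ^ 2"

lemma Dd_alt: "Dd p t = (1 + t * sin p * cos p)^2 + (t * sin p ^ 2)^2"
proof -
  have "(1 + t * sin p * cos p)^2 + (t * sin p ^ 2)^2 = 1 + 2 * t * sin p * cos p + t^2 * sin p ^ 2 * (sin p ^ 2 + cos p ^ 2)"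
    by (rule pid1)
  then show ?thesis by (simp add: Dd_def)
qed

lemma Gf_alg:
  fixes sx cx Tx p' t' :: real
  assumes sc: "sx^2+cx^2=1" and E: "1+Tx* sx* cx > 0"
  shows "p' - inverse (1 + (Tx* sx^2/(1+Tx* sx* cx))^2) * ((( t' * sx^2 + real 2 * (cx* p'* sx^(2 - Suc 0)) * Tx) * (1+Tx* sx* cx) - Tx* sx^2*(0 + ((t'* sx + cx* p'* Tx)* cx + - sx* p'*(Tx* sx)))) / ((1+Tx* sx* cx)*(1+Tx* sx* cx)))
     = p'/(1 + 2* Tx* sx* cx + Tx^2* sx^2) - t'* sx^2/(1 + 2* Tx* sx* cx + Tx^2* sx^2)"
proof -
  define E where "E = 1+Tx* sx* cx"
  define D where "D = 1 + 2* Tx* sx* cx + Tx^2* sx^2"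
  have DE: "D = E^2 + (Tx* sx^2)^2"
  proof -
    have "E^2 + (Tx* sx^2)^2 = 1 + 2* Tx* sx* cx + Tx^2* sx^2*(sx^2+cx^2)" unfolding E_def by (rule pid1)
    then show ?thesis using sc by (simp add: D_def)
  qed
  have Ep: "E > 0" using E by (simp add: E_def)
  have Dp: "D > 0" unfolding DE using Ep by (simp add: add_pos_nonneg)
  have n: "(( t' * sx^2 + real 2 * (cx* p'* sx^(2 - Suc 0)) * Tx) * (1+Tx* sx* cx) - Tx* sx^2*(0 + ((t'* sx + cx* p'* Tx)* cx + - sx* p'*(Tx* sx))))
     = t'* sx^2 + p'*(2* Tx* sx* cx + Tx^2* sx^2*(sx^2+cx^2))" by (simp add: numeral_2_eq_2 power2_eq_square algebra_simps)
  have n2: "(( t' * sx^2 + real 2 * (cx* p'* sx^(2 - Suc 0)) * Tx) * (1+Tx* sx* cx) - Tx* sx^2*(0 + ((t'* sx + cx* p'* Tx)* cx + - sx* p'*(Tx* sx))))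
     = t'* sx^2 + p'*(D - 1)" unfolding n sc D_def by simp
  have u: "inverse (1 + (Tx* sx^2/(1+Tx* sx* cx))^2) = E^2 / D" unfolding E_def[symmetric] DE using Ep
    by (simp add: field_simps)
  have "p' - inverse (1 + (Tx* sx^2/(1+Tx* sx* cx))^2) * ((( t' * sx^2 + real 2 * (cx* p'* sx^(2 - Suc 0)) * Tx) * (1+Tx* sx* cx) - Tx* sx^2*(0 + ((t'* sx + cx* p'* Tx)* cx + - sx* p'*(Tx* sx)))) / ((1+Tx* sx* cx)*(1+Tx* sx* cx)))
     = p' - E^2 / D * ((t'* sx^2 + p'*(D - 1)) / (E* E))" unfolding u n2 E_def by simp
  also have "\<dots> = p'/D - t'* sx^2/D" using Ep Dp by (simp add: field_simps power2_eq_square)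
  finally show ?thesis unfolding D_def .
qed

lemma Gf_deriv:
  assumes dp: "(p has_real_derivative p') (at x)" and dt: "(t has_real_derivative t') (at x)"
    and pos: "1 + t x * sin (p x) * cos (p x) > 0"
  shows "((\<lambda>x. Gf (p x) (t x)) has_real_derivative
           (p' / Dd (p x) (t x) - t' * sin (p x) ^ 2 / Dd (p x) (t x))) (at x)"
  unfolding Gf_def
  apply (rule derivative_eq_intros refl dp dt)+
  using pos apply simp
    apply (rule refl)
   apply (rule refl)
  using Gf_alg[of "sin (p x)" "cos (p x)" "t x" p' t'] pos by (simp add: Dd_def)


lemma Gf_cos_sin:
  assumes E: "1 + t* sin p* cos p > 0"
  shows "\<exists>\<rho>>0. cos (Gf p t) = \<rho>*(cos p + t* sin p) \<and> sin (Gf p t) = \<rho> * sin p"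
proof -
  define E where "E = 1 + t* sin p* cos p"
  define u where "u = t * sin p ^ 2 / E"
  define \<kappa> where "\<kappa> = 1 / sqrt (1 + u^2)"
  have kp: "\<kappa> > 0" unfolding \<kappa>_def by (simp add: add_pos_nonneg)
  have Ep: "E > 0" using E E_def by simp
  have G: "Gf p t = p - arctan u" unfolding Gf_def u_def E_def ..
  have cd: "cos (arctan u) = \<kappa>" "sin (arctan u) = u * \<kappa>"
    unfolding \<kappa>_def cos_arctan sin_arctan by simp_all
  have sc: "sin p ^ 2 + cos p ^ 2 = 1" by simp
  have "cos (Gf p t) = \<kappa> * (cos p + sin p * u)"
    unfolding G cos_diff cd by (simp add: algebra_simps)
  also have "cos p + sin p * u = (cos p * E + t * sin p ^ 3)/E" unfolding u_def using Ep
    by (simp add: field_simps power2_eq_square power3_eq_cube)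
  also have "cos p * E + t * sin p ^ 3 = cos p + t * sin p * (sin p ^ 2 + cos p ^ 2)"
    unfolding E_def by (rule pid2)
  finally have c1: "cos (Gf p t) = (\<kappa>/E) * (cos p + t * sin p)" using sc by simp
  have "sin (Gf p t) = \<kappa> * (sin p - cos p * u)"
    unfolding G sin_diff cd by (simp add: algebra_simps)
  also have "sin p - cos p * u = (sin p * E - t * cos p * sin p ^ 2)/E" unfolding u_def using Ep
    by (simp add: field_simps)
  also have "sin p * E - t * cos p * sin p ^ 2 = sin p"
    unfolding E_def by (simp add: algebra_simps power2_eq_square)
  finally have c2: "sin (Gf p t) = (\<kappa>/E) * sin p" by simp
  show ?thesis using c1 c2 kp Ep by (intro exI[of _ "\<kappa>/E"]) auto
qed

lemma Gf_le: assumes "t \<ge> 0" "1 + t* sin p* cos p > 0" shows "Gf p t \<le> p"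
  unfolding Gf_def using assms by (simp add: divide_nonneg_pos)

lemma Gf_0[simp]: "Gf p 0 = p" unfolding Gf_def by simp

lemma abs_sin_cos: "\<bar>sin (p::real) * cos p\<bar> \<le> 1/2"
proof -
  have "\<bar>sin (2* p)\<bar> \<le> 1" by (rule abs_sin_le_one)
  then show ?thesis unfolding sin_double by (simp add: abs_mult)
qed

lemma Dd_lower: assumes "t \<ge> 0" shows "Dd p t \<ge> 1 - t"
proof -
  have "2 * t * sin p * cos p \<ge> - t"
  proof -
    have "sin p * cos p \<ge> -1/2" using abs_sin_cos[of p] by linarith
    then have "t * (sin p * cos p) \<ge> t * (-1/2)" using assms by (intro mult_left_mono) auto
    then show ?thesis by (simp add: algebra_simps)
  qed
  moreover have "t^2 * sin p ^ 2 \<ge> 0" by simp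
  ultimately show ?thesis unfolding Dd_def by linarith
qed

lemma E_pos: fixes p :: real assumes "t \<ge> 0" "t < 2" shows "1 + t* sin p* cos p > 0"
proof -
  have "sin p * cos p \<ge> -1/2" using abs_sin_cos[of p] by linarith
  then have "t * (sin p * cos p) \<ge> t * (-1/2)" using assms by (intro mult_left_mono) auto
  then show ?thesis using assms by (simp add: algebra_simps)
qed

definition tb :: "real \<Rightarrow> real \<Rightarrow> real" where "tb c x = c * cos x / sin x"

lemma tb_deriv: assumes "sin x \<noteq> 0" shows "(tb c has_real_derivative (- c / sin x ^ 2)) (at x)"
proof -
  have "((\<lambda>x. c * cos x / sin x) has_real_derivative ((c * (- sin x)) * sin x - c * cos x * cos x) / (sin x * sin x)) (at x)"
    by (rule derivative_eq_intros refl assms | simp)+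
  moreover have "((c * (- sin x)) * sin x - c * cos x * cos x) / (sin x * sin x) = - c / sin x ^ 2"
  proof -
    have "(c * (- sin x)) * sin x - c * cos x * cos x = - c * (sin x ^ 2 + cos x ^ 2)" by (rule pid3)
    also have "\<dots> = - c" by simp
    finally show ?thesis by (simp add: power2_eq_square)
  qed
  ultimately show ?thesis unfolding tb_def by simp
qed

fun psi :: "(nat \<Rightarrow> real) \<Rightarrow> nat \<Rightarrow> real \<Rightarrow> real" where
  "psi b 0 x = 2* x"
| "psi b (Suc j) x = Gf (psi b j x) (tb (b (Suc j)) x) + 2* x"

fun dpsi :: "(nat \<Rightarrow> real) \<Rightarrow> nat \<Rightarrow> real \<Rightarrow> real" where
  "dpsi b 0 x = 2"
| "dpsi b (Suc j) x = dpsi b j x / Dd (psi b j x) (tb (b (Suc j)) x)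
     + sin (psi b j x) ^ 2 / Dd (psi b j x) (tb (b (Suc j)) x) * (b (Suc j) / sin x ^ 2) + 2"

fun xs :: "(nat \<Rightarrow> real) \<Rightarrow> real \<Rightarrow> nat \<Rightarrow> real" where
  "xs b x 0 = 0"
| "xs b x (Suc 0) = 1"
| "xs b x (Suc (Suc j)) = (2* cos(2* x) + 2 * b (Suc j) * cos x ^ 2) * xs b x (Suc j) - xs b x j"


context
  fixes b :: "nat \<Rightarrow> real" and h A :: real and N :: nat
  assumes hpos: "h > 0" and hN: "h * (real N + 1) = 1" and Apos: "A \<ge> 0" and hA: "h * A \<le> 1/2"
    and bb: "\<And>j. 1 \<le> j \<Longrightarrow> j \<le> N \<Longrightarrow> 0 \<le> b j \<and> b j \<le> h^2 * A / 2"
begin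

lemma h_le1: "h \<le> 1"
proof -
  have "h * 1 \<le> h * (real N + 1)" using hpos by (intro mult_left_mono) auto
  then show ?thesis using hN by simp
qed

lemma dom_facts:
  assumes "arctan (h/2) \<le> x" "x \<le> pi/2"
  shows "sin x > 0" "cos x \<ge> 0" "h * cos x \<le> 2 * sin x"
proof -
  have a0: "arctan (h/2) > 0" using hpos by simp
  have a1: "arctan (h/2) < pi/2" by (rule arctan_ubound)
  show s: "sin x > 0" using assms a0 pi_gt_zero by (intro sin_gt_zero) linarith+
  show "cos x \<ge> 0" using assms a0 pi_gt_zero by (intro cos_ge_zero) linarith+
  show "h * cos x \<le> 2 * sin x"
  proof (cases "x = pi/2")
    case True then have "cos x = 0" by (simp only: cos_pi_half)
    then show ?thesis using s by simp
  next
    case False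
    then have xl: "x < pi/2" using assms by simp
    have c: "cos x > 0" using assms a0 xl by (intro cos_gt_zero) linarith+
    have "tan (arctan (h/2)) \<le> tan x" using assms xl a0 a1 by (intro tan_mono_le) linarith+
    then have "h/2 \<le> sin x / cos x" unfolding tan_arctan by (simp add: tan_def)
    then show ?thesis using c by (simp add: field_simps)
  qed
qed

lemma tb_bounds:
  assumes "1 \<le> j" "j \<le> N" "arctan (h/2) \<le> x" "x \<le> pi/2"
  shows "0 \<le> tb (b j) x" "tb (b j) x \<le> h * A"
proof -
  note d = dom_facts[OF assms(3,4)]
  note bj = bb[OF assms(1,2)]
  show "0 \<le> tb (b j) x" unfolding tb_def using d bj by simp
  have "tb (b j) x = b j * cos x / sin x" by (simp add: tb_def)
  also have "\<dots> \<le> (h^2 * A / 2) * cos x / sin x" using d bj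
    by (intro divide_right_mono mult_right_mono) auto
  also have "\<dots> = (h * A / 2) * (h * cos x) / sin x" by (simp add: power2_eq_square)
  also have "\<dots> \<le> (h * A / 2) * (2 * sin x) / sin x" using d hpos Apos
    by (intro divide_right_mono mult_left_mono) auto
  also have "\<dots> = h * A" using d by simp
  finally show "tb (b j) x \<le> h * A" .
qed

lemma bsin_bound:
  assumes "1 \<le> j" "j \<le> N" "arctan (h/2) \<le> x" "x \<le> pi/2"
  shows "0 \<le> b j / sin x ^ 2" "b j / sin x ^ 2 \<le> 5/2 * A"
proof -
  note d = dom_facts[OF assms(3,4)]
  note bj = bb[OF assms(1,2)]
  show "0 \<le> b j / sin x ^ 2" using bj by simp
  have "(h * cos x)^2 \<le> (2 * sin x)^2" using d hpos by (intro power_mono) auto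
  then have "h^2 * (1 - sin x ^ 2) \<le> 4 * sin x ^ 2" by (simp add: power_mult_distrib cos_squared_eq)
  then have "h^2 \<le> sin x ^ 2 * (4 + h^2)" by (simp add: algebra_simps)
  also have "\<dots> \<le> sin x ^ 2 * 5" using h_le1 hpos by (intro mult_left_mono) (auto simp: power_le_one)
  finally have hs: "h^2 \<le> 5 * sin x ^ 2" by simp
  have "b j / sin x ^ 2 \<le> (h^2 * A / 2) / sin x ^ 2" using bj d by (intro divide_right_mono) auto
  also have "\<dots> \<le> (5 * sin x ^ 2 * A / 2) / sin x ^ 2" using hs Apos by (intro divide_right_mono) (auto intro: mult_right_mono)
  also have "\<dots> = 5/2 * A" using d by simp
  finally show "b j / sin x ^ 2 \<le> 5/2 * A" .
qed

lemma psi_deriv: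
  assumes "j \<le> N" "arctan (h/2) \<le> x" "x \<le> pi/2"
  shows "(psi b j has_real_derivative dpsi b j x) (at x) \<and> 0 \<le> dpsi b j x \<and>
         dpsi b j x \<le> (1/(1-h* A))^j * (2 + real j * (6* A+2))"
  using assms(1)
proof (induction j)
  case 0
  have e: "psi b 0 = (\<lambda>x. 2* x)" by (rule ext) simp
  have "(psi b 0 has_real_derivative 2) (at x)"
    unfolding e by (auto intro!: derivative_eq_intros)
  then show ?case by simp
next
  case (Suc j)
  from Suc have IH: "(psi b j has_real_derivative dpsi b j x) (at x)" "0 \<le> dpsi b j x"
     "dpsi b j x \<le> (1/(1-h* A))^j * (2 + real j * (6* A+2))" by auto
  define p where "p = psi b j x"
  define t where "t = tb (b (Suc j)) x"
  define D where "D = Dd p t"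
  define q where "q = 1/(1-h* A)"
  have d: "sin x > 0" "cos x \<ge> 0" using dom_facts assms by auto
  have t0: "0 \<le> t" "t \<le> h* A" unfolding t_def using tb_bounds[of "Suc j" x] Suc.prems assms by auto
  have bs: "0 \<le> b (Suc j) / sin x ^ 2" "b (Suc j) / sin x ^ 2 \<le> 5/2* A"
    using bsin_bound[of "Suc j" x] Suc.prems assms by auto
  have E: "1 + t * sin p * cos p > 0" using t0 hA by (intro E_pos) auto
  have hA1: "1 - h* A > 0" using hA by simp
  have Dl: "D \<ge> 1 - h* A" unfolding D_def using Dd_lower[OF t0(1), of p] t0 by linarith
  have Dp: "D > 0" using Dl hA1 by linarith
  have q1: "1 \<le> q" "q \<le> 2" unfolding q_def using hA hA1 Apos hpos by (auto simp: field_simps)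
  have der: "(psi b (Suc j) has_real_derivative
      (dpsi b j x / D - (- b (Suc j) / sin x ^ 2) * sin p ^ 2 / D + 2)) (at x)"
  proof -
    have "((\<lambda>x. Gf (psi b j x) (tb (b (Suc j)) x) + 2 * x) has_real_derivative
      (dpsi b j x / Dd (psi b j x) (tb (b (Suc j)) x) - (- b (Suc j) / sin x ^ 2) * sin (psi b j x) ^ 2 / Dd (psi b j x) (tb (b (Suc j)) x) + 2)) (at x)"
      apply (rule derivative_eq_intros Gf_deriv IH(1) tb_deriv)+
      using d E apply (simp_all add: p_def t_def)
      done
    moreover have "psi b (Suc j) = (\<lambda>x. Gf (psi b j x) (tb (b (Suc j)) x) + 2 * x)" by (rule ext) simp
    ultimately show ?thesis by (simp add: p_def t_def D_def)
  qed
  have dv: "dpsi b (Suc j) x = dpsi b j x / D + sin p ^ 2 / D * (b (Suc j) / sin x ^ 2) + 2"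
    by (simp add: p_def t_def D_def)
  have e1: "0 \<le> dpsi b j x / D" using IH(2) Dp by simp
  have e2: "0 \<le> sin p ^ 2 / D * (b (Suc j) / sin x ^ 2)" using Dp bs by (intro mult_nonneg_nonneg) auto
  have f1: "dpsi b j x / D \<le> q * dpsi b j x"
  proof -
    have "dpsi b j x / D \<le> dpsi b j x / (1 - h* A)" using IH(2) Dl hA1 by (intro divide_left_mono) auto
    then show ?thesis by (simp add: q_def)
  qed
  have f2: "sin p ^ 2 / D * (b (Suc j) / sin x ^ 2) \<le> 5 * A"
  proof -
    have "sin p ^ 2 / D \<le> 1 / (1 - h* A)"
    proof -
      have "sin p ^ 2 / D \<le> 1 / D" using Dp by (intro divide_right_mono) (auto simp: abs_sin_le_one sin_squared_eq)
      also have "\<dots> \<le> 1 / (1 - h* A)" using Dl hA1 by (intro divide_left_mono) auto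
      finally show ?thesis .
    qed
    then have "sin p ^ 2 / D \<le> 2" using q1 by (simp add: q_def)
    moreover have "0 \<le> sin p ^ 2 / D" using Dp by simp
    ultimately have "sin p ^ 2 / D * (b (Suc j) / sin x ^ 2) \<le> 2 * (5/2* A)"
      using bs by (intro mult_mono) auto
    then show ?thesis by simp
  qed
  have "dpsi b (Suc j) x \<le> q * dpsi b j x + (6* A+2)" unfolding dv using f1 f2 Apos by linarith
  also have "\<dots> \<le> q * (q^j * (2 + real j * (6* A+2))) + q^(Suc j) * (6* A+2)"
  proof -
    have "q * dpsi b j x \<le> q * (q^j * (2 + real j * (6* A+2)))" using IH(3) q1 by (intro mult_left_mono) (auto simp: q_def[symmetric])
    moreover have "1 * (6* A+2) \<le> q^(Suc j) * (6* A+2)" using q1 Apos by (intro mult_right_mono one_le_power) auto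
    ultimately show ?thesis by simp
  qed
  also have "\<dots> = q^(Suc j) * (2 + real (Suc j) * (6* A+2))" by (simp add: algebra_simps)
  finally have bnd: "dpsi b (Suc j) x \<le> (1/(1-h* A))^(Suc j) * (2 + real (Suc j) * (6* A+2))" by (simp add: q_def)
  have "dpsi b j x / D - (- b (Suc j) / sin x ^ 2) * sin p ^ 2 / D + 2 = dpsi b (Suc j) x"
    unfolding dv by (simp add: field_simps)
  with der have der': "(psi b (Suc j) has_real_derivative dpsi b (Suc j) x) (at x)" by simp
  have "0 \<le> dpsi b (Suc j) x" unfolding dv using e1 e2 by linarith
  with der' bnd show ?case by blast
qed


lemma qpow_bound: "(1/(1-h* A))^N \<le> exp (2* A)"
proof -
  have hA1: "1 - h* A > 0" using hA by simp
  have hA0: "h* A \<ge> 0" using hpos Apos by simp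
  have "1/(1-h* A) \<le> 1 + 2*(h* A)"
  proof -
    have "1 \<le> (1 + 2*(h* A)) * (1-h* A)"
    proof -
      have "(1 + 2*(h* A)) * (1-h* A) = 1 + (h* A) * (1 - 2*(h* A))" by (simp add: algebra_simps)
      moreover have "(h* A) * (1 - 2*(h* A)) \<ge> 0" using hA hA0 by simp
      ultimately show ?thesis by simp
    qed
    then show ?thesis using hA1 by (simp add: field_simps)
  qed
  also have "\<dots> \<le> exp (2*(h* A))" by (rule exp_ge_add_one_self)
  finally have "(1/(1-h* A))^N \<le> exp (2*(h* A))^N" using hA1 by (intro power_mono) auto
  also have "\<dots> = exp (real N * (2*(h* A)))" by (simp add: exp_of_nat_mult)
  also have "\<dots> \<le> exp (2* A)"
  proof -
    have "real N * h \<le> 1" using hN hpos by (simp add: algebra_simps)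
    then have "real N * h * (2* A) \<le> 1 * (2* A)" using Apos by (intro mult_right_mono) auto
    then show ?thesis by (simp add: algebra_simps)
  qed
  finally show ?thesis .
qed

lemma dpsiN_bound:
  assumes "arctan (h/2) \<le> x" "x \<le> pi/2"
  shows "(psi b N has_real_derivative dpsi b N x) (at x)" "0 \<le> dpsi b N x" "dpsi b N x \<le> (exp (2* A) * (6* A+2) * (real N + 1))"
proof -
  note P = psi_deriv[OF order_refl assms]
  show "(psi b N has_real_derivative dpsi b N x) (at x)" "0 \<le> dpsi b N x" using P by auto
  have "dpsi b N x \<le> (1/(1-h* A))^N * (2 + real N * (6* A+2))" using P by auto
  also have "\<dots> \<le> exp (2* A) * ((6* A+2) * (real N + 1))"
  proof (rule mult_mono[OF qpow_bound])
    show "2 + real N * (6 * A + 2) \<le> (6 * A + 2) * (real N + 1)" using Apos by (simp add: algebra_simps)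
  qed (use Apos in auto)
  finally show "dpsi b N x \<le> (exp (2* A) * (6* A+2) * (real N + 1))" by (simp add: mult.assoc)
qed

lemma psi_lip:
  assumes "arctan (h/2) \<le> x" "x \<le> y" "y \<le> pi/2"
  shows "0 \<le> psi b N y - psi b N x \<and> psi b N y - psi b N x \<le> (exp (2* A) * (6* A+2) * (real N + 1)) * (y - x)"
proof (cases "x = y")
  case False
  then have xy: "x < y" using assms by simp
  obtain z where z: "x < z" "z < y" "psi b N y - psi b N x = (y - x) * dpsi b N z"
    using MVT2[OF xy, of "psi b N" "dpsi b N"] dpsiN_bound(1) assms by force
  have "0 \<le> dpsi b N z" "dpsi b N z \<le> (exp (2* A) * (6* A+2) * (real N + 1))" using dpsiN_bound(2,3)[of z] z assms by auto
  then show ?thesis unfolding z(3) using xy by (auto simp: mult.commute intro: mult_right_mono)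
qed simp

lemma psi_cont:
  assumes "arctan (h/2) \<le> x" "x \<le> pi/2"
  shows "isCont (psi b N) x"
  using dpsiN_bound(1)[OF assms] by (rule DERIV_isCont)

lemma psi_upper:
  assumes "j \<le> N" "arctan (h/2) \<le> x" "x \<le> pi/2"
  shows "psi b j x \<le> 2 * x * (real j + 1)"
  using assms(1)
proof (induction j)
  case (Suc j)
  have t0: "0 \<le> tb (b (Suc j)) x" "tb (b (Suc j)) x \<le> h* A" using tb_bounds[of "Suc j" x] Suc.prems assms by auto
  have "Gf (psi b j x) (tb (b (Suc j)) x) \<le> psi b j x"
    using t0 hA by (intro Gf_le E_pos) auto
  then show ?case using Suc by (simp add: algebra_simps)
qed simp

lemma psi_top: "psi b j (pi/2) = (real j + 1) * pi"
  by (induction j) (auto simp: tb_def algebra_simps)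

lemma psi_roots:
  assumes "1 \<le> k" "k \<le> N"
  shows "\<exists>x. arctan (h/2) < x \<and> x < pi/2 \<and> psi b N x = real k * pi"
proof -
  define a0 where "a0 = arctan (h/2)"
  have a0: "0 < a0" "a0 < pi/2" unfolding a0_def using hpos arctan_ubound by auto
  have "psi b N a0 \<le> 2 * a0 * (real N + 1)" using psi_upper[of N a0] a0 by (simp add: a0_def)
  also have "\<dots> \<le> 2 * (h/2) * (real N + 1)" unfolding a0_def using hpos
    by (intro mult_right_mono mult_left_mono arctan_le_self) auto
  also have "\<dots> = 1" using hN by simp
  finally have lo1: "psi b N a0 \<le> 1" .
  have "1 * pi \<le> real k * pi" using assms by (intro mult_right_mono) auto
  then have lo: "psi b N a0 < real k * pi" using lo1 pi_ge_two by linarith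
  have hi: "real k * pi < psi b N (pi/2)" unfolding psi_top using assms by (intro mult_strict_right_mono) auto
  obtain x where x: "a0 \<le> x" "x \<le> pi/2" "psi b N x = real k * pi"
    using IVT[of "psi b N" a0 "real k * pi" "pi/2"] lo hi a0 psi_cont[of _] by (force simp: a0_def)
  have "x \<noteq> a0" using x lo by auto
  moreover have "x \<noteq> pi/2"
  proof
    assume "x = pi/2"
    then have "psi b N x = psi b N (pi/2)" by (simp only:)
    then show False using x(3) hi by linarith
  qed
  ultimately have "a0 < x" "x < pi/2" using x by auto
  then show ?thesis using x(3) unfolding a0_def by blast
qed

lemma xs_inv:
  assumes "j \<le> N" "arctan (h/2) \<le> x" "x < pi/2"
  shows "\<exists>r>0. xs b x (Suc j) = r * sin (psi b j x) \<and>
           cos (2*x) * xs b x (Suc j) - xs b x j = r * sin (2*x) * cos (psi b j x)"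
  using assms(1)
proof (induction j)
  case 0
  have a0: "arctan (h/2) > 0" using hpos by simp
  have s2: "sin (2*x) > 0" using assms a0 by (intro sin_gt_zero) linarith+
  show ?case using s2 by (intro exI[of _ "1/sin (2*x)"]) auto
next
  case (Suc j)
  then obtain r where r: "r > 0" "xs b x (Suc j) = r * sin (psi b j x)"
     "cos (2*x) * xs b x (Suc j) - xs b x j = r * sin (2*x) * cos (psi b j x)" by auto
  define p where "p = psi b j x"
  define t where "t = tb (b (Suc j)) x"
  define X1 where "X1 = xs b x (Suc j)"
  define X0 where "X0 = xs b x j"
  define c2 where "c2 = cos (2*x)"
  define s2 where "s2 = sin (2*x)"
  have t0: "0 \<le> t" "t \<le> h*A" unfolding t_def using tb_bounds[of "Suc j" x] Suc.prems assms by auto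
  have E: "1 + t * sin p * cos p > 0" using t0 hA by (intro E_pos) auto
  obtain \<rho> where \<rho>: "\<rho> > 0" "cos (Gf p t) = \<rho> * (cos p + t * sin p)" "sin (Gf p t) = \<rho> * sin p"
    using Gf_cos_sin[OF E] by blast
  have sx: "sin x > 0" using dom_facts assms by auto
  have ts: "t * s2 = 2 * b (Suc j) * cos x ^ 2"
    unfolding t_def tb_def s2_def sin_double using sx by (simp add: field_simps power2_eq_square)
  have rec: "xs b x (Suc (Suc j)) = (2 * c2 + t * s2) * X1 - X0"
    unfolding ts by (simp add: X1_def X0_def c2_def)
  have ps: "psi b (Suc j) x = Gf p t + 2*x" by (simp add: p_def t_def)
  have R1: "X1 = r * sin p" using r unfolding X1_def p_def by simp
  have R2: "c2 * X1 - X0 = r * s2 * cos p" using r unfolding X1_def X0_def p_def c2_def s2_def by simp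
  have cs: "c2^2 + s2^2 = 1" unfolding c2_def s2_def by simp
  have e1: "xs b x (Suc (Suc j)) = (r/\<rho>) * sin (psi b (Suc j) x)"
  proof -
    have "(r/\<rho>) * sin (psi b (Suc j) x) = (r/\<rho>) * (sin (Gf p t) * c2 + cos (Gf p t) * s2)"
      unfolding ps sin_add c2_def s2_def ..
    also have "\<dots> = r * (sin p * c2 + (cos p + t * sin p) * s2)" unfolding \<rho> using \<rho>(1)
      by (simp add: field_simps)
    also have "\<dots> = c2 * (r * sin p) + (r * s2 * cos p) + t * s2 * (r * sin p)" by (simp add: algebra_simps)
    also have "\<dots> = (2 * c2 + t * s2) * X1 - X0" unfolding R1[symmetric] R2[symmetric] by (simp add: algebra_simps)
    finally show ?thesis unfolding rec by simp
  qed
  have e2: "cos (2*x) * xs b x (Suc (Suc j)) - xs b x (Suc j) = (r/\<rho>) * sin (2*x) * cos (psi b (Suc j) x)"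
  proof -
    have "(r/\<rho>) * sin (2*x) * cos (psi b (Suc j) x) = (r/\<rho>) * s2 * (cos (Gf p t) * c2 - sin (Gf p t) * s2)"
      unfolding ps cos_add c2_def s2_def ..
    also have "\<dots> = r * s2 * ((cos p + t * sin p) * c2 - sin p * s2)" unfolding \<rho> using \<rho>(1)
      by (simp add: field_simps)
    also have "\<dots> = c2 * (r * s2 * cos p) + t * s2 * c2 * (r * sin p) - s2^2 * (r * sin p)" by (simp add: algebra_simps power2_eq_square)
    also have "\<dots> = c2 * (c2 * X1 - X0) + t * s2 * c2 * X1 - s2^2 * X1" unfolding R1[symmetric] R2[symmetric] ..
    also have "\<dots> = c2 * ((2 * c2 + t * s2) * X1 - X0) - (c2^2 + s2^2) * X1" by (simp add: algebra_simps power2_eq_square)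
    also have "\<dots> = c2 * ((2 * c2 + t * s2) * X1 - X0) - X1" unfolding cs by simp
    finally show ?thesis unfolding rec X1_def c2_def by simp
  qed
  show ?case using e1 e2 r(1) \<rho>(1) by (intro exI[of _ "r/\<rho>"]) auto
qed

lemma xs_end:
  assumes "arctan (h/2) \<le> x" "x < pi/2" "sin (psi b N x) = 0"
  shows "xs b x (Suc N) = 0"
  using xs_inv[OF order_refl assms(1,2)] assms(3) by auto

lemma Cgappos: "(exp (2* A) * (6* A+2) * (real N + 1)) > 0" using Apos by (intro mult_pos_pos) auto

lemma root_gap:
  assumes "arctan (h/2) \<le> x" "x \<le> pi/2" "arctan (h/2) \<le> y" "y \<le> pi/2"
    and "psi b N x = real k * pi" "psi b N y = real l * pi" "k \<noteq> l"
  shows "pi / (exp (2* A) * (6* A+2) * (real N + 1)) \<le> \<bar>x - y\<bar>"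
proof -
  have main: "pi / (exp (2* A) * (6* A+2) * (real N + 1)) \<le> v - u" if uv: "arctan (h/2) \<le> u" "u \<le> v" "v \<le> pi/2"
     and pu: "psi b N u = real k' * pi" and pv: "psi b N v = real l' * pi" and kl: "k' \<noteq> l'" for u v k' l'
  proof -
    note L = psi_lip[OF uv]
    have "0 \<le> (real l' - real k') * pi" using L pu pv by (simp add: algebra_simps)
    then have "real k' \<le> real l'" using pi_gt_zero by (auto simp add: zero_le_mult_iff)
    then have "real k' + 1 \<le> real l'" using kl by linarith
    then have "1 * pi \<le> (real l' - real k') * pi" by (intro mult_right_mono) auto
    then have "pi \<le> (real l' - real k') * pi" by simp
    also have "\<dots> \<le> (exp (2* A) * (6* A+2) * (real N + 1)) * (v - u)" using L pu pv by (simp add: algebra_simps)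
    finally show ?thesis using Cgappos by (simp add: field_simps mult.commute)
  qed
  show ?thesis
  proof (cases "x \<le> y")
    case True then show ?thesis using main[of x y k l] assms by auto
  next
    case False then show ?thesis using main[of y x l k] assms by auto
  qed
qed

end


lemma tri_sum:
  fixes w :: "nat \<Rightarrow> real"
  assumes i: "i < N" and w0: "w 0 = 0" and wN: "w (Suc N) = 0"
  shows "(\<Sum>j\<in>{0..<N}. (c * (if i = j then p else if i = j + 1 \<or> j = i + 1 then q else 0)) * w (Suc j))
     = c * (p * w (Suc i) + q * w i + q * w (Suc (Suc i)))"
proof -
  have pw: "(c * (if i = j then p else if i = j + 1 \<or> j = i + 1 then q else 0)) * w (Suc j)
     = c* p*(if j = i then w (Suc j) else 0) + c* q*(if j + 1 = i then w (Suc j) else 0)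
       + c* q*(if j = i+1 then w (Suc j) else 0)" for j
    by auto
  have s1: "(\<Sum>j\<in>{0..<N}. (if j = i then w (Suc j) else 0)) = w (Suc i)"
    using i by (simp add: sum.delta)
  have s2: "(\<Sum>j\<in>{0..<N}. (if j + 1 = i then w (Suc j) else 0)) = w i"
  proof (cases i)
    case 0 then show ?thesis using w0 by simp
  next
    case (Suc k)
    then have "(\<Sum>j\<in>{0..<N}. (if j + 1 = i then w (Suc j) else 0)) = (\<Sum>j\<in>{0..<N}. (if j = k then w (Suc j) else 0))"
      by (intro sum.cong) auto
    also have "\<dots> = w i" using i Suc by (simp add: sum.delta)
    finally show ?thesis .
  qed
  have s3: "(\<Sum>j\<in>{0..<N}. (if j = i+1 then w (Suc j) else 0)) = w (Suc (Suc i))"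
  proof (cases "i + 1 < N")
    case True then show ?thesis by (simp add: sum.delta)
  next
    case False then have "i + 1 = N" using i by simp
    then show ?thesis using wN by (simp add: sum.delta)
  qed
  show ?thesis unfolding pw sum.distrib sum_distrib_left[symmetric] s1 s2 s3
    by (simp add: algebra_simps)
qed

lemma diag_sum:
  fixes w :: "nat \<Rightarrow> real"
  assumes i: "i < N"
  shows "(\<Sum>j\<in>{0..<N}. (if i = j then d else 0) * w (Suc j)) = d * w (Suc i)"
proof -
  have "(\<Sum>j\<in>{0..<N}. (if i = j then d else 0) * w (Suc j)) = (\<Sum>j\<in>{0..<N}. (if i = j then d * w (Suc j) else 0))"
    by (intro sum.cong) auto
  also have "\<dots> = d * w (Suc i)" using i by (simp add: sum.delta)
  finally show ?thesis .
qed

definition vw :: "nat \<Rightarrow> (nat \<Rightarrow> real) \<Rightarrow> real vec" where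
  "vw N w = vec N (\<lambda>i. w (Suc i))"

lemma K_row:
  assumes "i < N" "w 0 = 0" "w (Suc N) = 0"
  shows "(K_h N *\<^sub>v vw N w) $ i = (1 / mesh N) * (2 * w (Suc i) - w i - w (Suc (Suc i)))"
proof -
  have "(K_h N *\<^sub>v vw N w) $ i = (\<Sum>j\<in>{0..<N}. ((1 / mesh N) * (if i = j then 2 else if i = j + 1 \<or> j = i + 1 then -1 else 0)) * w (Suc j))"
  proof -
    have "(K_h N *\<^sub>v vw N w) $ i = row (K_h N) i \<bullet> vw N w" using assms(1) by (simp add: K_h_def)
    also have "\<dots> = (\<Sum>j\<in>{0..<N}. ((1 / mesh N) * (if i = j then 2 else if i = j + 1 \<or> j = i + 1 then -1 else 0)) * w (Suc j))" using assms(1) unfolding scalar_prod_def by (intro sum.cong) (auto simp: K_h_def vw_def)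
    finally show ?thesis .
  qed
  also have "\<dots> = (1 / mesh N) * (2 * w (Suc i) + (-1) * w i + (-1) * w (Suc (Suc i)))"
    by (rule tri_sum[OF assms])
  finally show ?thesis by simp
qed

lemma M_row:
  assumes "i < N" "w 0 = 0" "w (Suc N) = 0"
  shows "(M_h N *\<^sub>v vw N w) $ i = (mesh N / 4) * (2 * w (Suc i) + w i + w (Suc (Suc i)))"
proof -
  have "(M_h N *\<^sub>v vw N w) $ i = (\<Sum>j\<in>{0..<N}. ((mesh N / 4) * (if i = j then 2 else if i = j + 1 \<or> j = i + 1 then 1 else 0)) * w (Suc j))"
  proof -
    have "(M_h N *\<^sub>v vw N w) $ i = row (M_h N) i \<bullet> vw N w" using assms(1) by (simp add: M_h_def)
    also have "\<dots> = (\<Sum>j\<in>{0..<N}. ((mesh N / 4) * (if i = j then 2 else if i = j + 1 \<or> j = i + 1 then 1 else 0)) * w (Suc j))" using assms(1) unfolding scalar_prod_def by (intro sum.cong) (auto simp: M_h_def vw_def)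
    finally show ?thesis .
  qed
  also have "\<dots> = (mesh N / 4) * (2 * w (Suc i) + 1 * w i + 1 * w (Suc (Suc i)))"
    by (rule tri_sum[OF assms])
  finally show ?thesis by simp
qed

lemma L_row:
  assumes "i < N"
  shows "(L_h a N *\<^sub>v vw N w) $ i = mesh N * a (real (i + 1) * mesh N) * w (Suc i)"
proof -
  have "(L_h a N *\<^sub>v vw N w) $ i = (\<Sum>j\<in>{0..<N}. (if i = j then mesh N * a (real (i + 1) * mesh N) else 0) * w (Suc j))"
  proof -
    have "(L_h a N *\<^sub>v vw N w) $ i = row (L_h a N) i \<bullet> vw N w" using assms(1) by (simp add: L_h_def)
    also have "\<dots> = (\<Sum>j\<in>{0..<N}. ((if i = j then mesh N * a (real (i + 1) * mesh N) else 0)) * w (Suc j))" using assms(1) unfolding scalar_prod_def by (intro sum.cong) (auto simp: L_h_def vw_def)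
    finally show ?thesis .
  qed
  also have "\<dots> = mesh N * a (real (i + 1) * mesh N) * w (Suc i)"
    by (rule diag_sum[OF assms])
  finally show ?thesis .
qed

lemma dims[simp]: "dim_row (K_h N) = N" "dim_col (K_h N) = N" "dim_row (M_h N) = N" "dim_col (M_h N) = N"
  "dim_row (L_h a N) = N" "dim_col (L_h a N) = N"
  by (auto simp: K_h_def M_h_def L_h_def)

lemma carriers[simp]: "K_h N \<in> carrier_mat N N" "M_h N \<in> carrier_mat N N" "L_h a N \<in> carrier_mat N N"
  "vw N w \<in> carrier_vec N"
  by (auto simp: K_h_def M_h_def L_h_def vw_def)

lemma alt_rec:
  fixes w :: "nat \<Rightarrow> real"
  assumes w0: "w 0 = 0" and rec: "\<And>j. 1 \<le> j \<Longrightarrow> j \<le> N \<Longrightarrow> w (Suc j) = -2 * w j - w (j - 1)"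
  shows "j \<le> Suc N \<Longrightarrow> w j = (-1)^(j+1) * real j * w 1 \<and> (Suc j \<le> Suc N \<longrightarrow> w (Suc j) = (-1)^(j+2) * real (Suc j) * w 1)"
proof (induction j)
  case 0 then show ?case using w0 by simp
next
  case (Suc j)
  then have IH: "w j = (-1)^(j+1) * real j * w 1" "w (Suc j) = (-1)^(j+2) * real (Suc j) * w 1" by auto
  show ?case
  proof (intro conjI impI)
    show "w (Suc j) = (- 1) ^ (Suc j + 1) * real (Suc j) * w 1" using IH by simp
    assume "Suc (Suc j) \<le> Suc N"
    then have "w (Suc (Suc j)) = -2 * w (Suc j) - w j" using rec[of "Suc j"] by simp
    also have "\<dots> = (-1)^(Suc j + 2) * real (Suc (Suc j)) * w 1" unfolding IH by (simp add: algebra_simps)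
    finally show "w (Suc (Suc j)) = (-1)^(Suc j + 2) * real (Suc (Suc j)) * w 1" .
  qed
qed

lemma mesh_pos: "mesh N > 0" by (simp add: mesh_def)

lemma M_det: "det (M_h N) \<noteq> 0"
proof
  assume "det (M_h N) = 0"
  then obtain v where v: "v \<in> carrier_vec N" "v \<noteq> 0\<^sub>v N" "M_h N *\<^sub>v v = 0\<^sub>v N"
    using det_0_iff_vec_prod_zero_field[OF carriers(2)] by blast
  define w where "w j = (if 1 \<le> j \<and> j \<le> N then v $ (j - 1) else 0)" for j
  have w0: "w 0 = 0" "w (Suc N) = 0" by (auto simp: w_def)
  have vv: "v = vw N w" using v(1) by (intro eq_vecI) (auto simp: vw_def w_def)
  have rec: "w (Suc j) = -2 * w j - w (j - 1)" if j: "1 \<le> j" "j \<le> N" for j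
  proof -
    have "(M_h N *\<^sub>v vw N w) $ (j - 1) = 0" using v(3) vv j by simp
    then have "(mesh N / 4) * (2 * w j + w (j-1) + w (Suc j)) = 0"
      using M_row[of "j - 1" N w] w0 j by simp
    then show ?thesis using mesh_pos[of N] by simp
  qed
  have w1: "w 1 = 0"
  proof -
    have "w (Suc N) = (-1)^(Suc N+1) * real (Suc N) * w 1" using alt_rec[of w N "Suc N"] w0 rec by blast
    then show ?thesis using w0 by simp
  qed
  have "w j = 0" if "j \<le> Suc N" for j using alt_rec[of w N j] w0 rec that w1 by simp
  then have "vw N w = 0\<^sub>v N" by (intro eq_vecI) (auto simp: vw_def)
  then show False using v(2) vv by simp
qed

lemma M_inv: "\<exists>Mi. mat_inverse (M_h N) = Some Mi \<and> M_h N * Mi = 1\<^sub>m N \<and> Mi * M_h N = 1\<^sub>m N \<and> Mi \<in> carrier_mat N N"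
proof (cases "mat_inverse (M_h N)")
  case None
  have "M_h N \<notin> Units (ring_mat TYPE(real) N ())" by (rule mat_inverse(1)[OF carriers(2)[of N] None])
  moreover have "M_h N \<in> Units (ring_mat TYPE(real) N ())" by (rule det_non_zero_imp_unit[OF carriers(2) M_det])
  ultimately show ?thesis by blast
next
  case (Some Mi)
  then show ?thesis using mat_inverse(2)[OF carriers(2)] by blast
qed

lemma op_carrier: "op_h a N \<in> carrier_mat N N"
  using M_inv[of N] unfolding op_h_def by auto

lemma eigen_from_rows:
  assumes w0: "w 0 = 0" "w (Suc N) = 0" and w1: "w 1 \<noteq> 0" and N: "N \<ge> 1"
    and rows: "\<And>i. i < N \<Longrightarrow> (1 / mesh N) * (2 * w (Suc i) - w i - w (Suc (Suc i))) + mesh N * a (real (i + 1) * mesh N) * w (Suc i)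
         = \<mu> * ((mesh N / 4) * (2 * w (Suc i) + w i + w (Suc (Suc i))))"
  shows "eigenvalue (op_h a N) \<mu>"
proof -
  obtain Mi where Mi: "mat_inverse (M_h N) = Some Mi" "Mi * M_h N = 1\<^sub>m N" "Mi \<in> carrier_mat N N"
    using M_inv[of N] by blast
  define v where "v = vw N w"
  have vc: "v \<in> carrier_vec N" by (simp add: v_def)
  have vnz: "v \<noteq> 0\<^sub>v N"
  proof
    assume "v = 0\<^sub>v N"
    then have "v $ 0 = 0" using N by simp
    then show False using w1 N by (simp add: v_def vw_def)
  qed
  have KL: "(K_h N + L_h a N) *\<^sub>v v = \<mu> \<cdot>\<^sub>v (M_h N *\<^sub>v v)"
  proof (rule eq_vecI)
    fix i assume "i < dim_vec (\<mu> \<cdot>\<^sub>v (M_h N *\<^sub>v v))"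
    then have i: "i < N" by (simp add: M_h_def)
    have "((K_h N + L_h a N) *\<^sub>v v) $ i = (K_h N *\<^sub>v v) $ i + (L_h a N *\<^sub>v v) $ i"
      by (simp add: add_mult_distrib_mat_vec[of _ N N] vc i)
    also have "\<dots> = \<mu> * ((M_h N *\<^sub>v v) $ i)"
      unfolding v_def K_row[OF i w0] L_row[OF i] M_row[OF i w0] by (rule rows[OF i])
    finally show "((K_h N + L_h a N) *\<^sub>v v) $ i = (\<mu> \<cdot>\<^sub>v (M_h N *\<^sub>v v)) $ i" using i by simp
  qed (simp)
  have "op_h a N *\<^sub>v v = Mi *\<^sub>v ((K_h N + L_h a N) *\<^sub>v v)"
    unfolding op_h_def Mi(1) using Mi(3) vc by (simp add: assoc_mult_mat_vec[of _ N N _ N])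
  also have "\<dots> = \<mu> \<cdot>\<^sub>v (Mi *\<^sub>v (M_h N *\<^sub>v v))" unfolding KL using Mi(3) vc
    by (intro mult_mat_vec[of _ N N] mult_mat_vec_carrier[of _ N N] carriers)
  also have "Mi *\<^sub>v (M_h N *\<^sub>v v) = v" using Mi vc
    by (simp add: assoc_mult_mat_vec[of _ N N _ N, symmetric])
  finally have "op_h a N *\<^sub>v v = \<mu> \<cdot>\<^sub>v v" .
  then show ?thesis unfolding eigenvalue_def eigenvector_def using vc vnz op_carrier[of a N] by auto
qed

lemma eig_finite_card:
  "finite {\<mu>. eigenvalue (op_h a N) \<mu>} \<and> card {\<mu>. eigenvalue (op_h a N) \<mu>} \<le> N"
proof -
  note C = op_carrier[of a N]
  have dg: "degree (char_poly (op_h a N)) = N" "coeff (char_poly (op_h a N)) N = 1"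
    using degree_monic_char_poly[OF C] by auto
  have nz: "char_poly (op_h a N) \<noteq> 0" using dg(2) by auto
  have eq: "{\<mu>. eigenvalue (op_h a N) \<mu>} = {\<mu>. poly (char_poly (op_h a N)) \<mu> = 0}"
    using eigenvalue_root_char_poly[OF C] by auto
  show ?thesis unfolding eq using poly_roots_finite[OF nz] card_poly_roots_bound[OF nz] dg(1) by auto
qed

lemma tan_gap:
  assumes "0 \<le> x" "x \<le> y" "y < pi/2"
  shows "y - x \<le> tan y - tan x"
proof (cases "x = y")
  case False
  then have xy: "x < y" using assms by simp
  have cz: "cos z > 0" if "x \<le> z" "z \<le> y" for z using assms that by (intro cos_gt_zero_pi) linarith+
  obtain z where z: "x < z" "z < y" "tan y - tan x = (y - x) * inverse ((cos z)\<^sup>2)"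
    using MVT2[OF xy, of tan "\<lambda>z. inverse ((cos z)\<^sup>2)"] cz by (force intro: DERIV_tan)
  have c: "cos z > 0" using cz z by auto
  have "(cos z)\<^sup>2 \<le> 1" by (simp add: cos_squared_eq)
  then have "1 \<le> inverse ((cos z)\<^sup>2)" using c by (simp add: one_le_inverse)
  then have "(y - x) * 1 \<le> (y - x) * inverse ((cos z)\<^sup>2)" using xy by (intro mult_left_mono) auto
  then show ?thesis using z by simp
qed simp

lemma row_id:
  fixes s c h a W0 W W2 :: real
  assumes c: "c > 0" and h: "h > 0" and sc: "s^2 + c^2 = 1"
    and W2: "W2 = (2*(c^2 - s^2) + h^2* a* c^2)* W - W0"
  shows "(1/h)*(2* W - W0 - W2) + h* a* W = ((2*(s/c)/h)^2) * ((h/4)*(2* W + W0 + W2))"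
proof -
  have s2: "s^2 = 1 - c^2" using sc by simp
  have W2': "W2 = (2*(2* c^2 - 1) + h^2* a* c^2)* W - W0" unfolding W2 s2 by simp
  have q: "(2*(s/c)/h)^2 = 4*(1-c^2)/(c^2* h^2)" by (simp add: power_divide power_mult_distrib s2)
  define C where "C = c^2"
  have C: "C > 0" using c by (simp add: C_def)
  have "(1/h)*(2* W - W0 - W2) + h* a* W = (1/h)*(2* W - (2*(2* C - 1) + h^2* a* C)* W) + h* a* W"
    unfolding W2' C_def by simp
  also have "\<dots> = 4*(1-C)/(C* h^2) * ((h/4)*(2* W + (2*(2* C - 1) + h^2* a* C)* W))"
    using C h by (simp add: field_simps power2_eq_square)
  also have "\<dots> = ((2*(s/c)/h)^2) * ((h/4)*(2* W + W0 + W2))" unfolding q W2' C_def by simp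
  finally show ?thesis .
qed

lemma core:
  fixes a :: "real \<Rightarrow> real" and A :: real and N :: nat
  assumes N: "N \<ge> 1" and Apos: "A \<ge> 0" and hA: "mesh N * A \<le> 1/2"
    and aA: "\<forall>x\<in>{0..1}. 0 \<le> a x \<and> a x \<le> A"
  shows "finite {\<mu>. eigenvalue (op_h a N) \<mu>} \<and> card {\<mu>. eigenvalue (op_h a N) \<mu>} = N \<and>
    (\<forall>\<mu>\<in>{\<mu>. eigenvalue (op_h a N) \<mu>}. 1 \<le> sqrt \<mu>) \<and>
    (\<forall>\<mu>\<in>{\<mu>. eigenvalue (op_h a N) \<mu>}. \<forall>\<nu>\<in>{\<mu>. eigenvalue (op_h a N) \<mu>}. \<mu> \<noteq> \<nu> \<longrightarrow>
        2*pi/(exp(2*A)*(6*A+2)) \<le> \<bar>sqrt \<mu> - sqrt \<nu>\<bar>)"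
proof -
  define S where "S = {\<mu>. eigenvalue (op_h a N) \<mu>}"
  define h where "h = mesh N"
  define b where "b j = h^2 * a (real j * h) / 2" for j
  define \<gamma>1 where "\<gamma>1 = 2*pi/(exp(2*A)*(6*A+2))"
  have hpos: "h > 0" by (simp add: h_def mesh_pos)
  have hN: "h * (real N + 1) = 1" by (simp add: h_def mesh_def)
  have hA': "h * A \<le> 1/2" using hA h_def by simp
  have bb: "\<And>j. 1 \<le> j \<Longrightarrow> j \<le> N \<Longrightarrow> 0 \<le> b j \<and> b j \<le> h^2 * A / 2"
  proof -
    fix j assume j: "1 \<le> j" "j \<le> N"
    have "real j * h \<le> (real N + 1) * h" using j hpos by (intro mult_right_mono) auto
    then have "real j * h \<le> 1" using hN by (simp add: mult.commute)
    moreover have "0 \<le> real j * h" using hpos by simp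
    ultimately have "0 \<le> a (real j * h) \<and> a (real j * h) \<le> A" using aA by auto
    then show "0 \<le> b j \<and> b j \<le> h^2 * A / 2" unfolding b_def by (auto intro: mult_left_mono)
  qed
  note ctx = hpos hN Apos hA' bb
  have roots: "\<forall>k\<in>{1..N}. \<exists>x. arctan (h/2) < x \<and> x < pi/2 \<and> psi b N x = real k * pi"
    using psi_roots[where b=b and h=h and A=A and N=N, OF ctx] by auto
  obtain xk where xk: "\<forall>k\<in>{1..N}. arctan (h/2) < xk k \<and> xk k < pi/2 \<and> psi b N (xk k) = real k * pi"
    using bchoice[OF roots] by blast
  have xkP: "arctan (h/2) < xk k \<and> xk k < pi/2 \<and> psi b N (xk k) = real k * pi" if "k \<in> {1..N}" for k
    using xk that by blast
  define \<mu>f where "\<mu>f x = (2 * tan x / h)^2" for x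
  have a0pos: "0 < arctan (h/2)" using hpos by simp
  have tanlow: "h/2 \<le> tan (xk k)" if "k \<in> {1..N}" for k
  proof -
    have "arctan (h/2) < xk k" "xk k < pi/2" using xkP[OF that] by auto
    then have "tan (arctan (h/2)) \<le> tan (xk k)" using a0pos by (intro tan_mono_le) linarith+
    then show ?thesis by (simp add: tan_arctan)
  qed
  have sq: "sqrt (\<mu>f (xk k)) = 2 * tan (xk k) / h" if "k \<in> {1..N}" for k
    using tanlow[OF that] hpos unfolding \<mu>f_def by simp
  have sq1: "1 \<le> sqrt (\<mu>f (xk k))" if "k \<in> {1..N}" for k
    using tanlow[OF that] hpos unfolding sq[OF that] by (simp add: field_simps)
  have \<gamma>1pos: "\<gamma>1 > 0" unfolding \<gamma>1_def using Apos by (intro divide_pos_pos mult_pos_pos) auto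
  have gap: "\<gamma>1 \<le> \<bar>sqrt (\<mu>f (xk k)) - sqrt (\<mu>f (xk l))\<bar>" if "k \<in> {1..N}" "l \<in> {1..N}" "k \<noteq> l" for k l
  proof -
    have xkk: "arctan (h/2) \<le> xk k" "xk k \<le> pi/2" "psi b N (xk k) = real k * pi" using xkP[OF that(1)] by auto
    have xkl: "arctan (h/2) \<le> xk l" "xk l \<le> pi/2" "psi b N (xk l) = real l * pi" using xkP[OF that(2)] by auto
    have rg: "pi / (exp (2*A) * (6*A+2) * (real N + 1)) \<le> \<bar>xk k - xk l\<bar>"
      using root_gap[where b=b and h=h and A=A and N=N, OF ctx xkk(1,2) xkl(1,2) xkk(3) xkl(3) that(3)]
      by simp
    have tg: "\<bar>xk k - xk l\<bar> \<le> \<bar>tan (xk k) - tan (xk l)\<bar>"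
    proof (cases "xk k \<le> xk l")
      case True then show ?thesis using tan_gap[of "xk k" "xk l"] xkP[OF that(1)] xkP[OF that(2)] a0pos by force
    next
      case False then show ?thesis using tan_gap[of "xk l" "xk k"] xkP[OF that(1)] xkP[OF that(2)] a0pos by force
    qed
    have "(2/h) * (pi / (exp (2*A) * (6*A+2) * (real N + 1))) = 2 * pi / (exp (2*A) * (6*A+2) * (h * (real N + 1)))"
      using hpos by (simp add: field_simps)
    also have "\<dots> = \<gamma>1" unfolding hN \<gamma>1_def by simp
    finally have "\<gamma>1 = (2/h) * (pi / (exp (2*A) * (6*A+2) * (real N + 1)))" by simp
    also have "\<dots> \<le> (2/h) * \<bar>tan (xk k) - tan (xk l)\<bar>" using rg tg hpos by (intro mult_left_mono) auto
    also have "\<dots> = \<bar>2 * tan (xk k) / h - 2 * tan (xk l) / h\<bar>"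
    proof -
      have "2 * tan (xk k) / h - 2 * tan (xk l) / h = (2/h) * (tan (xk k) - tan (xk l))" using hpos by (simp add: diff_divide_distrib right_diff_distrib)
      moreover have "\<bar>(2/h) * (tan (xk k) - tan (xk l))\<bar> = (2/h) * \<bar>tan (xk k) - tan (xk l)\<bar>"
        unfolding abs_mult using hpos by simp
      ultimately show ?thesis by simp
    qed
    also have "\<dots> = \<bar>sqrt (\<mu>f (xk k)) - sqrt (\<mu>f (xk l))\<bar>" unfolding sq[OF that(1)] sq[OF that(2)] ..
    finally show ?thesis .
  qed
  have inS: "\<mu>f (xk k) \<in> S" if k: "k \<in> {1..N}" for k
  proof -
    define x where "x = xk k"
    have x: "arctan (h/2) < x" "x < pi/2" "psi b N x = real k * pi" using xkP[OF k] unfolding x_def by auto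
    have cx: "cos x > 0" using x a0pos pi_gt_zero by (intro cos_gt_zero_pi) linarith+
    have wN: "xs b x (Suc N) = 0" using xs_end[where b=b and h=h and A=A and N=N, OF ctx, where x=x] x by simp
    show ?thesis unfolding S_def mem_Collect_eq x_def[symmetric]
    proof (rule eigen_from_rows[of "xs b x" N])
      show "xs b x 0 = 0" by simp
      show "xs b x (Suc N) = 0" by (rule wN)
      show "xs b x 1 \<noteq> 0" by (simp add: One_nat_def)
      show "N \<ge> 1" by (rule N)
      fix i assume i: "i < N"
      have W2: "xs b x (Suc (Suc i)) = (2*((cos x)^2 - (sin x)^2) + h^2 * a (real (i+1) * h) * (cos x)^2) * xs b x (Suc i) - xs b x i"
      proof -
        have c2: "cos (2*x) = (cos x)^2 - (sin x)^2" by (rule cos_double)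
        show ?thesis unfolding xs.simps c2 b_def by (simp add: algebra_simps)
      qed
      have "(1/h)*(2 * xs b x (Suc i) - xs b x i - xs b x (Suc (Suc i))) + h * a (real (i+1) * h) * xs b x (Suc i)
          = ((2*(sin x/cos x)/h)^2) * ((h/4)*(2 * xs b x (Suc i) + xs b x i + xs b x (Suc (Suc i))))"
        by (rule row_id[OF cx hpos _ W2]) simp
      then show "1 / mesh N * (2 * xs b x (Suc i) - xs b x i - xs b x (Suc (Suc i))) +
          mesh N * a (real (i + 1) * mesh N) * xs b x (Suc i) =
          \<mu>f x * (mesh N / 4 * (2 * xs b x (Suc i) + xs b x i + xs b x (Suc (Suc i))))"
        unfolding \<mu>f_def h_def[symmetric] by (simp add: tan_def)
    qed
  qed
  have inj: "inj_on (\<lambda>k. \<mu>f (xk k)) {1..N}"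
  proof (rule inj_onI)
    fix k l assume kl: "k \<in> {1..N}" "l \<in> {1..N}" "\<mu>f (xk k) = \<mu>f (xk l)"
    show "k = l"
    proof (rule ccontr)
      assume "k \<noteq> l"
      then have "\<gamma>1 \<le> \<bar>sqrt (\<mu>f (xk k)) - sqrt (\<mu>f (xk l))\<bar>" using gap kl by blast
      then show False using kl(3) \<gamma>1pos by simp
    qed
  qed
  define T where "T = (\<lambda>k. \<mu>f (xk k)) ` {1..N}"
  have cT: "card T = N" unfolding T_def using card_image[OF inj] by simp
  have TS: "T \<subseteq> S" unfolding T_def using inS by auto
  have fS: "finite S" "card S \<le> N" using eig_finite_card[of a N] unfolding S_def by auto
  have "card T = card S" using card_mono[OF fS(1) TS] cT fS(2) by linarith
  then have TeqS: "T = S" using card_subset_eq[OF fS(1) TS] by simp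
  have cS: "card S = N" using TeqS cT by simp
  have P1: "\<forall>\<mu>\<in>S. 1 \<le> sqrt \<mu>" unfolding TeqS[symmetric] T_def using sq1 by auto
  have P2: "\<forall>\<mu>\<in>S. \<forall>\<nu>\<in>S. \<mu> \<noteq> \<nu> \<longrightarrow> \<gamma>1 \<le> \<bar>sqrt \<mu> - sqrt \<nu>\<bar>"
    unfolding TeqS[symmetric] T_def using gap by fastforce
  show ?thesis using fS(1) cS P1 P2 unfolding S_def \<gamma>1_def by blast
qed


theorem theorem4:
  fixes a :: "real \<Rightarrow> real"
  assumes nonneg: "\<forall>x\<in>{0..1}. a x \<ge> 0"
    and bdd: "bounded (a ` {0..1})"
    and meas: "a \<in> borel_measurable (restrict_space lborel {0..1})"
  shows "\<exists>h0 > 0. \<exists>\<gamma>0 > 0. \<forall>N::nat. N \<ge> 1 \<longrightarrow> mesh N < h0 \<longrightarrow>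
           (\<forall>n m :: int. n \<noteq> 0 \<longrightarrow> m \<noteq> 0 \<longrightarrow> n \<noteq> m \<longrightarrow>
              \<bar>n\<bar> \<le> int N \<longrightarrow> \<bar>m\<bar> \<le> int N \<longrightarrow>
              \<bar>lambda_h a N n - lambda_h a N m\<bar> \<ge> \<gamma>0)"
proof -
  obtain B where B: "\<forall>y\<in>a ` {0..1}. norm y \<le> B" using bdd unfolding bounded_iff by blast
  define A where "A = max B 0"
  have Apos: "A \<ge> 0" by (simp add: A_def)
  have aA: "\<forall>x\<in>{0..1}. 0 \<le> a x \<and> a x \<le> A"
  proof
    fix x :: real assume x: "x \<in> {0..1}"
    have "norm (a x) \<le> B" using B x by blast
    then show "0 \<le> a x \<and> a x \<le> A" using nonneg x unfolding A_def by auto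
  qed
  define \<gamma>1 where "\<gamma>1 = 2*pi/(exp(2*A)*(6*A+2))"
  have \<gamma>1pos: "\<gamma>1 > 0" unfolding \<gamma>1_def using Apos by (intro divide_pos_pos mult_pos_pos) auto
  define h0 where "h0 = 1 / (2*A+1)"
  have h0pos: "h0 > 0" unfolding h0_def using Apos by simp
  define \<gamma>0 where "\<gamma>0 = min 2 \<gamma>1"
  have \<gamma>0pos: "\<gamma>0 > 0" unfolding \<gamma>0_def using \<gamma>1pos by simp
  have main: "\<gamma>0 \<le> \<bar>lambda_h a N n - lambda_h a N m\<bar>"
    if N: "N \<ge> 1" and hN: "mesh N < h0" and nm: "n \<noteq> 0" "m \<noteq> 0" "n \<noteq> m" "\<bar>n\<bar> \<le> int N" "\<bar>m\<bar> \<le> int N"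
    for N :: nat and n m :: int
  proof -
    have hA: "mesh N * A \<le> 1/2"
    proof -
      have "mesh N * A \<le> h0 * A" using hN Apos by (intro mult_right_mono) auto
      also have "\<dots> = A / (2*A+1)" unfolding h0_def by simp
      also have "\<dots> \<le> 1/2" using Apos by (simp add: field_simps)
      finally show ?thesis .
    qed
    define S where "S = {\<mu>. eigenvalue (op_h a N) \<mu>}"
    have C: "finite S" "card S = N" "\<forall>\<mu>\<in>S. 1 \<le> sqrt \<mu>"
      "\<forall>\<mu>\<in>S. \<forall>\<nu>\<in>S. \<mu> \<noteq> \<nu> \<longrightarrow> \<gamma>1 \<le> \<bar>sqrt \<mu> - sqrt \<nu>\<bar>"
      using core[OF N Apos hA aA] unfolding S_def \<gamma>1_def by auto
    define L where "L = sorted_list_of_set S"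
    have L: "length L = N" "distinct L" "set L = S" unfolding L_def using C(1,2) by auto
    have mu: "mu_h a N k = L ! (k - 1)" for k unfolding mu_h_def L_def S_def ..
    have inS: "L ! (k - 1) \<in> S" if "1 \<le> k" "k \<le> N" for k
    proof -
      have "k - 1 < length L" using L(1) that by simp
      then show ?thesis using L(3) nth_mem by blast
    qed
    define k where "k = nat \<bar>n\<bar>"
    define l where "l = nat \<bar>m\<bar>"
    have k: "1 \<le> k" "k \<le> N" unfolding k_def using nm by auto
    have l: "1 \<le> l" "l \<le> N" unfolding l_def using nm by auto
    define p where "p = L ! (k - 1)"
    define q where "q = L ! (l - 1)"
    have pS: "p \<in> S" unfolding p_def using inS k by simp
    have qS: "q \<in> S" unfolding q_def using inS l by simp
    have lamn: "lambda_h a N n = of_int (sgn n) * sqrt p" unfolding lambda_h_def mu p_def k_def ..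
    have lamm: "lambda_h a N m = of_int (sgn m) * sqrt q" unfolding lambda_h_def mu q_def l_def ..
    have p1: "1 \<le> sqrt p" "1 \<le> sqrt q" using C(3) pS qS by auto
    have same: "\<gamma>0 \<le> \<bar>sqrt p - sqrt q\<bar>" if "k \<noteq> l"
    proof -
      have "k - 1 \<noteq> l - 1" using that k l by simp
      then have "p \<noteq> q" unfolding p_def q_def using L k l by (simp add: nth_eq_iff_index_eq)
      then have "\<gamma>1 \<le> \<bar>sqrt p - sqrt q\<bar>" using C(4) pS qS by blast
      then show ?thesis unfolding \<gamma>0_def by simp
    qed
    have diff: "\<gamma>0 \<le> sqrt p + sqrt q"
    proof -
      have "2 \<le> sqrt p + sqrt q" using p1 by linarith
      moreover have "\<gamma>0 \<le> 2" unfolding \<gamma>0_def by simp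
      ultimately show ?thesis by linarith
    qed
    show ?thesis
    proof (cases "n > 0")
      case True
      show ?thesis
      proof (cases "m > 0")
        case True
        have "k \<noteq> l" unfolding k_def l_def using \<open>n > 0\<close> True nm(3) by auto
        then show ?thesis using same \<open>n > 0\<close> True unfolding lamn lamm by simp
      next
        case False
        then have "m < 0" using nm(2) by simp
        then show ?thesis using diff \<open>n > 0\<close> unfolding lamn lamm by simp
      qed
    next
      case False
      then have nneg: "n < 0" using nm(1) by simp
      show ?thesis
      proof (cases "m > 0")
        case True
        then show ?thesis using diff nneg unfolding lamn lamm by simp
      next
        case False
        then have "m < 0" using nm(2) by simp
        have "k \<noteq> l" unfolding k_def l_def using nneg \<open>m < 0\<close> nm(3) by auto
        then show ?thesis using same nneg \<open>m < 0\<close> unfolding lamn lamm by (simp add: abs_minus_commute)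
      qed
    qed
  qed
  show ?thesis
    apply (rule exI[of _ h0])
    apply (rule conjI[OF h0pos])
    apply (rule exI[of _ \<gamma>0])
    apply (rule conjI[OF \<gamma>0pos])
    apply (intro allI impI)
    apply (rule main)
          apply assumption+
    done
qed

end
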